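(* Let $F$ be a field of characteristic zero. The Lie algebra $W^+(1,0)$ is not simple.
   Context: $W^+(1,0)$ is the subalgebra of $W(1,0)$ spanned by $\{e^{ax}x^i\partial: a,i\in\mathbb N\}$ ($\mathbb N$ the nonnegative integers), where elements are vector fields $f\partial$ with $f$ in the algebra with basis $e^{ax}x^i$ (multiplication adding exponents), $\partial(e^{ax}x^i)=ae^{ax}x^i+ie^{ax}x^{i-1}$, and $[f\partial,g\partial]=(f\partial(g)-g\partial(f))\partial$. *)

theory Defs
  imports Main
begin

text \<open>Elements of W^+(1,0) over a field 'a: finitely supported coefficient functions
  f :: nat \<times> nat \<Rightarrow> 'a, where f (a,i) is the coefficient of e^{ax} x^i \<partial>.
  The same functions also represent elements of the function algebra spanned by e^{ax} x^i.\<close>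

definition Wplus :: "(nat \<times> nat \<Rightarrow> 'a::field) set" where
  "Wplus = {f. finite {p. f p \<noteq> 0}}"

text \<open>Product in the function algebra: e^{ax}x^i * e^{bx}x^j = e^{(a+b)x}x^{i+j}.\<close>
definition fmult :: "(nat \<times> nat \<Rightarrow> 'a::field) \<Rightarrow> (nat \<times> nat \<Rightarrow> 'a) \<Rightarrow> nat \<times> nat \<Rightarrow> 'a" where
  "fmult f g = (\<lambda>(c, k). \<Sum>a\<le>c. \<Sum>i\<le>k. f (a, i) * g (c - a, k - i))"

text \<open>\<partial>(e^{ax}x^i) = a e^{ax}x^i + i e^{ax}x^{i-1}.\<close>
definition fderiv :: "(nat \<times> nat \<Rightarrow> 'a::field) \<Rightarrow> nat \<times> nat \<Rightarrow> 'a" where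
  "fderiv f = (\<lambda>(a, i). of_nat a * f (a, i) + of_nat (i + 1) * f (a, i + 1))"

text \<open>[f\<partial>, g\<partial>] = (f \<partial>(g) - g \<partial>(f)) \<partial>.\<close>
definition wbracket :: "(nat \<times> nat \<Rightarrow> 'a::field) \<Rightarrow> (nat \<times> nat \<Rightarrow> 'a) \<Rightarrow> nat \<times> nat \<Rightarrow> 'a" where
  "wbracket f g = (\<lambda>p. fmult f (fderiv g) p - fmult g (fderiv f) p)"

definition Wplus_ideal :: "(nat \<times> nat \<Rightarrow> 'a::field) set \<Rightarrow> bool" where
  "Wplus_ideal I \<longleftrightarrow> I \<subseteq> Wplus \<and> (\<lambda>_. 0) \<in> I
     \<and> (\<forall>f\<in>I. \<forall>g\<in>I. (\<lambda>p. f p + g p) \<in> I)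
     \<and> (\<forall>c. \<forall>f\<in>I. (\<lambda>p. c * f p) \<in> I)
     \<and> (\<forall>f\<in>I. \<forall>g\<in>Wplus. wbracket f g \<in> I)"

definition Wplus_simple :: "'a::field itself \<Rightarrow> bool" where
  "Wplus_simple TYPE('a) \<longleftrightarrow>
     (\<exists>f\<in>(Wplus :: (nat \<times> nat \<Rightarrow> 'a) set). \<exists>g\<in>Wplus. wbracket f g \<noteq> (\<lambda>_. 0))
     \<and> (\<forall>I :: (nat \<times> nat \<Rightarrow> 'a) set. Wplus_ideal I \<longrightarrow> I = {\<lambda>_. 0} \<or> I = Wplus)"

end

theory Submission
  imports Defs
begin

definition bnd :: "(nat \<times> nat \<Rightarrow> 'a::field) \<Rightarrow> nat \<Rightarrow> bool" where
  "bnd f N \<longleftrightarrow> (\<forall>a i. f (a, i) \<noteq> 0 \<longrightarrow> a \<le> N \<and> i \<le> N)"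

lemma fin_bnd:
  assumes "finite {p. (f::nat \<times> nat \<Rightarrow> 'a::field) p \<noteq> 0}"
  shows "\<exists>N. bnd f N"
proof -
  let ?S = "(\<lambda>p. fst p + snd p) ` {p. f p \<noteq> 0}"
  have "finite ?S" using assms by simp
  then obtain N where N: "\<forall>x\<in>?S. x \<le> N" using finite_nat_set_iff_bounded_le by blast
  have "bnd f N" unfolding bnd_def
  proof (intro allI impI)
    fix a i assume "f (a, i) \<noteq> 0"
    then have "a + i \<in> ?S" by force
    then show "a \<le> N \<and> i \<le> N" using N by fastforce
  qed
  then show ?thesis by blast
qed

lemma bnd_fin:
  assumes "bnd f N"
  shows "finite {p. f p \<noteq> 0}"
proof -
  have "{p. f p \<noteq> 0} \<subseteq> {..N} \<times> {..N}" using assms unfolding bnd_def by auto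
  then show ?thesis by (rule finite_subset) simp
qed

lemma bnd_fmult:
  assumes "bnd f N" "bnd g M"
  shows "bnd (fmult f g) (N + M)"
  unfolding bnd_def
proof (intro allI impI)
  fix c k assume ne: "fmult f g (c, k) \<noteq> 0"
  show "c \<le> N + M \<and> k \<le> N + M"
  proof (rule ccontr)
    assume "\<not> (c \<le> N + M \<and> k \<le> N + M)"
    have "f (a, i) * g (c - a, k - i) = 0" if "a \<le> c" "i \<le> k" for a i
    proof (rule ccontr)
      assume "f (a, i) * g (c - a, k - i) \<noteq> 0"
      then have "f (a, i) \<noteq> 0" "g (c - a, k - i) \<noteq> 0" by auto
      then have "a \<le> N" "i \<le> N" "c - a \<le> M" "k - i \<le> M"
        using assms unfolding bnd_def by blast+
      then show False using that \<open>\<not> (c \<le> N + M \<and> k \<le> N + M)\<close> by linarith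
    qed
    then have "fmult f g (c, k) = 0" unfolding fmult_def by (auto intro!: sum.neutral)
    then show False using ne by simp
  qed
qed

lemma bnd_fderiv:
  assumes "bnd f N"
  shows "bnd (fderiv f) N"
  unfolding bnd_def
proof (intro allI impI)
  fix a i assume h: "fderiv f (a, i) \<noteq> 0"
  then have "f (a, i) \<noteq> 0 \<or> f (a, i + 1) \<noteq> 0" unfolding fderiv_def by auto
  then show "a \<le> N \<and> i \<le> N" using assms unfolding bnd_def by fastforce
qed

lemma bnd_wbracket:
  assumes "bnd f N" "bnd g M"
  shows "bnd (wbracket f g) (N + M)"
proof -
  have 1: "bnd (fmult f (fderiv g)) (N + M)" using assms bnd_fmult bnd_fderiv by blast
  have 2: "bnd (fmult g (fderiv f)) (N + M)" using assms bnd_fmult bnd_fderiv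
    by (metis add.commute)
  show ?thesis unfolding bnd_def wbracket_def
  proof (intro allI impI)
    fix a i assume "fmult f (fderiv g) (a, i) - fmult g (fderiv f) (a, i) \<noteq> 0"
    then have "fmult f (fderiv g) (a, i) \<noteq> 0 \<or> fmult g (fderiv f) (a, i) \<noteq> 0" by auto
    then show "a \<le> N + M \<and> i \<le> N + M" using 1 2 unfolding bnd_def by blast
  qed
qed

lemma wbracket_Wplus:
  assumes "f \<in> Wplus" "g \<in> Wplus"
  shows "wbracket f g \<in> Wplus"
proof -
  obtain N where "bnd f N" using assms fin_bnd unfolding Wplus_def by blast
  moreover obtain M where "bnd g M" using assms fin_bnd unfolding Wplus_def by blast
  ultimately show ?thesis using bnd_wbracket bnd_fin unfolding Wplus_def by blast
qed

definition II :: "(nat \<times> nat \<Rightarrow> 'a::field) set" where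
  "II = {f \<in> Wplus. \<forall>i. f (0, i) = 0}"

lemma wbracket_zero:
  assumes "\<forall>i. f (0, i) = 0"
  shows "wbracket f g (0, k) = 0"
proof -
  have a: "fmult f (fderiv g) (0, k) = 0" unfolding fmult_def using assms by simp
  have "\<forall>j. fderiv f (0, j) = 0" unfolding fderiv_def using assms by simp
  then have b: "fmult g (fderiv f) (0, k) = 0" unfolding fmult_def by simp
  show ?thesis unfolding wbracket_def using a b by simp
qed

lemma II_ideal: "Wplus_ideal (II :: (nat \<times> nat \<Rightarrow> 'a::field) set)"
  unfolding Wplus_ideal_def
proof (intro conjI ballI allI)
  show "II \<subseteq> Wplus" unfolding II_def by auto
  show "(\<lambda>_. 0) \<in> (II :: (nat \<times> nat \<Rightarrow> 'a::field) set)" unfolding II_def Wplus_def by simp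
next
  fix f g :: "nat \<times> nat \<Rightarrow> 'a" assume "f \<in> II" "g \<in> II"
  then show "(\<lambda>p. f p + g p) \<in> II" unfolding II_def Wplus_def
    by (auto intro: finite_subset[of _ "{p. f p \<noteq> 0} \<union> {p. g p \<noteq> 0}"])
next
  fix c :: 'a and f :: "nat \<times> nat \<Rightarrow> 'a" assume "f \<in> II"
  then show "(\<lambda>p. c * f p) \<in> II" unfolding II_def Wplus_def
    by (auto intro: finite_subset[of _ "{p. f p \<noteq> 0}"])
next
  fix f g :: "nat \<times> nat \<Rightarrow> 'a" assume "f \<in> II" "g \<in> Wplus"
  then show "wbracket f g \<in> II" unfolding II_def
    using wbracket_Wplus wbracket_zero by blast
qed

theorem proposition2:
  shows "\<not> Wplus_simple TYPE('a::field_char_0)"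
proof
  assume "Wplus_simple TYPE('a)"
  then have H: "\<forall>I :: (nat \<times> nat \<Rightarrow> 'a) set. Wplus_ideal I \<longrightarrow> I = {\<lambda>_. 0} \<or> I = Wplus"
    unfolding Wplus_simple_def by (rule conjunct2)
  have D: "(II :: (nat \<times> nat \<Rightarrow> 'a) set) = {\<lambda>_. 0} \<or> II = (Wplus :: (nat \<times> nat \<Rightarrow> 'a) set)"
    using H[rule_format, OF II_ideal] by simp
  define e1 :: "nat \<times> nat \<Rightarrow> 'a" where "e1 = (\<lambda>p. if p = (1, 0) then 1 else 0)"
  define e0 :: "nat \<times> nat \<Rightarrow> 'a" where "e0 = (\<lambda>p. if p = (0, 0) then 1 else 0)"
  have s1: "{p. e1 p \<noteq> 0} = {(1, 0)}" unfolding e1_def by auto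
  have s0: "{p. e0 p \<noteq> 0} = {(0, 0)}" unfolding e0_def by auto
  have "e1 \<in> Wplus" unfolding Wplus_def using s1 by simp
  then have A: "e1 \<in> II" unfolding II_def e1_def by simp
  have B: "e0 \<notin> II" unfolding II_def e0_def by simp
  have C: "e0 \<in> Wplus" unfolding Wplus_def using s0 by simp
  show False using D
  proof
    assume "(II :: (nat \<times> nat \<Rightarrow> 'a) set) = {\<lambda>_. 0}"
    then have "e1 = (\<lambda>_. 0::'a)" using A by blast
    then have "e1 (1, 0) = 0" by simp
    then show False unfolding e1_def by simp
  next
    assume "(II :: (nat \<times> nat \<Rightarrow> 'a) set) = Wplus"
    then show False using B C by simp
  qed
qed

end
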